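(* For every integer $n\ge 2$, the clique number of $D_n$ is $$Cl(D_n)=\tau(n)+\pi(n)-\omega(n)+\gamma_1(n).$$ In particular, if $n$ is prime, $Cl(D_n)=\pi(n)+1$.
   Context: $D_n$ is the graph with vertex set $\{1,\dots,n\}$ in which distinct $a,b$ are adjacent iff $\gcd(a,b)\mid n$ (the maximal Diophantine graph of order $n$). $Cl(G)$ is the maximum order of a complete subgraph of $G$. $\pi(x)$ is the number of primes $\le x$, $\omega(n)$ the number of distinct primes dividing $n$, $\tau(n)$ the number of positive divisors of $n$. For a prime $p$, $\acute v_p(n):=v_p(n)+1$ where $v_p$ is the $p$-adic valuation, and for real $0<x<n$, $\gamma_x(n):=\left|\{p^{\acute v_p(n)} : p \text{ prime},\ p\mid n,\ x<p^{\acute v_p(n)}<n\}\right|$. *)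

theory Defs
  imports Complex_Main "HOL-Computational_Algebra.Primes"
begin

text \<open>Simple graph given by a vertex set and a (symmetric, irreflexive) adjacency relation.\<close>

definition is_clique :: "'a set \<Rightarrow> ('a \<Rightarrow> 'a \<Rightarrow> bool) \<Rightarrow> 'a set \<Rightarrow> bool" where
  "is_clique V adj S \<longleftrightarrow> S \<subseteq> V \<and> (\<forall>a\<in>S. \<forall>b\<in>S. a \<noteq> b \<longrightarrow> adj a b)"

text \<open>Clique number: maximum order of a complete subgraph (V assumed finite).\<close>
definition clique_number :: "'a set \<Rightarrow> ('a \<Rightarrow> 'a \<Rightarrow> bool) \<Rightarrow> nat" where
  "clique_number V adj = Max (card ` {S. is_clique V adj S})"

definition D_vertices :: "nat \<Rightarrow> nat set" where
  "D_vertices n = {1..n}"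

definition D_adj :: "nat \<Rightarrow> nat \<Rightarrow> nat \<Rightarrow> bool" where
  "D_adj n a b \<longleftrightarrow> a \<noteq> b \<and> gcd a b dvd n"

definition Cl_D :: "nat \<Rightarrow> nat" where
  "Cl_D n = clique_number (D_vertices n) (D_adj n)"

definition prime_pi :: "nat \<Rightarrow> nat" where
  "prime_pi x = card {p. prime p \<and> p \<le> x}"

definition omega :: "nat \<Rightarrow> nat" where
  "omega n = card (prime_factors n)"

definition tau :: "nat \<Rightarrow> nat" where
  "tau n = card {d. d dvd n}"

definition vacute :: "nat \<Rightarrow> nat \<Rightarrow> nat" where
  "vacute p n = multiplicity p n + 1"

definition gamma :: "real \<Rightarrow> nat \<Rightarrow> nat" where
  "gamma x n = card {p ^ vacute p n | p. prime p \<and> p dvd n \<and>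
                        x < real (p ^ vacute p n) \<and> p ^ vacute p n < n}"

end

theory Submission
  imports Defs
begin

lemma Q_dvd_iff:
  fixes p n x :: nat
  assumes "prime p" "x > 0"
  shows "p ^ vacute p n dvd x \<longleftrightarrow> multiplicity p n < multiplicity p x"
proof -
  have "p \<noteq> 1" using assms(1) by auto
  then have "\<not> is_unit p" by simp
  then show ?thesis
    using power_dvd_iff_le_multiplicity[of x p "multiplicity p n + 1"] assms
    by (simp add: vacute_def Suc_le_eq)
qed

lemma L1:
  fixes n x :: nat
  assumes "n > 0" "x > 0"
  shows "x dvd n \<longleftrightarrow> (\<forall>p. prime p \<longrightarrow> \<not> p ^ vacute p n dvd x)"
proof
  assume "x dvd n"
  show "\<forall>p. prime p \<longrightarrow> \<not> p ^ vacute p n dvd x"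
  proof (intro allI impI notI)
    fix p :: nat assume p: "prime p" and d: "p ^ vacute p n dvd x"
    have "p ^ vacute p n dvd n" using d \<open>x dvd n\<close> by (rule dvd_trans)
    with Q_dvd_iff[OF p assms(1), of n] show False by simp
  qed
next
  assume H: "\<forall>p. prime p \<longrightarrow> \<not> p ^ vacute p n dvd x"
  show "x dvd n"
  proof (rule multiplicity_le_imp_dvd)
    show "x \<noteq> 0" using assms by simp
    fix p :: nat assume "prime p"
    then show "multiplicity p x \<le> multiplicity p n"
      using H Q_dvd_iff[OF \<open>prime p\<close> assms(2), of n] by auto
  qed
qed

lemma L2:
  fixes n a b :: nat
  assumes "n > 0" "a > 0"
  shows "gcd a b dvd n \<longleftrightarrow> (\<forall>p. prime p \<longrightarrow> \<not> (p ^ vacute p n dvd a \<and> p ^ vacute p n dvd b))"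
  using L1[OF assms(1), of "gcd a b"] assms by simp

lemma Q_inj:
  fixes p q :: nat
  assumes "prime p" "prime q" "p ^ Suc k dvd q ^ Suc l"
  shows "p = q"
proof -
  have "p dvd p ^ Suc k" by simp
  then have "p dvd q ^ Suc l" using assms(3) by (rule dvd_trans)
  then have "p dvd q" using assms(1) prime_dvd_power by blast
  then show ?thesis using assms primes_dvd_imp_eq by blast
qed

lemma Q_inj':
  fixes p q n :: nat
  assumes "prime p" "prime q" "p ^ vacute p n dvd q ^ vacute q n"
  shows "p = q"
  using Q_inj[of p q "multiplicity p n" "multiplicity q n"] assms by (simp add: vacute_def)

lemma Q_ge: "prime p \<Longrightarrow> p \<le> (p::nat) ^ vacute p n"
proof -
  assume "prime p"
  then have "0 < p" by (simp add: prime_gt_0_nat)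
  then have "1 \<le> p ^ multiplicity p n" by simp
  then have "p * 1 \<le> p * p ^ multiplicity p n" by (rule mult_le_mono2)
  then show ?thesis by (simp add: vacute_def)
qed

lemma Q_pos: "prime p \<Longrightarrow> 0 < (p::nat) ^ vacute p n"
  by (simp add: prime_gt_0_nat)

lemma Cl_formula:
  fixes n :: nat
  assumes n: "n \<ge> 2"
  defines "Q \<equiv> \<lambda>p. p ^ vacute p n"
  defines "F \<equiv> {d. d dvd n}"
  defines "P \<equiv> {p. prime p \<and> Q p \<le> n}"
  shows "Cl_D n = card F + card P"
proof -
  have n0: "n > 0" using n by simp
  have finF: "finite F" unfolding F_def using n0 by simp
  have finP: "finite P"
    by (rule finite_subset[of _ "{..n}"]) (auto simp: P_def Q_def dest: Q_ge[of _ n])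
  have QinjP: "inj_on Q P" unfolding inj_on_def P_def Q_def by (metis (mono_tags, lifting) Q_inj' dvd_refl mem_Collect_eq)
  have QnotF: "Q p \<notin> F" if "prime p" for p
    using L1[OF n0 Q_pos[OF that, of n]] that unfolding F_def Q_def by auto
  define S0 where "S0 = F \<union> Q ` P"
  have cl0: "is_clique (D_vertices n) (D_adj n) S0"
    unfolding is_clique_def
  proof
    show "S0 \<subseteq> D_vertices n"
    proof
      fix x assume "x \<in> S0"
      then consider "x dvd n" | p where "prime p" "Q p \<le> n" "x = Q p"
        unfolding S0_def F_def P_def by auto
      then show "x \<in> D_vertices n"
      proof cases
        case 1 then show ?thesis using n0 unfolding D_vertices_def
          by (auto intro: dvd_imp_le Nat.gr0I)
      next
        case 2 then show ?thesis using Q_pos[of p n] unfolding D_vertices_def Q_def by auto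
      qed
    qed
    show "\<forall>a\<in>S0. \<forall>b\<in>S0. a \<noteq> b \<longrightarrow> D_adj n a b"
    proof (intro ballI impI)
      fix a b assume a: "a \<in> S0" and b: "b \<in> S0" and ab: "a \<noteq> b"
      have a0: "a > 0" using a n0 Q_pos unfolding S0_def F_def P_def Q_def
        by (auto intro: Nat.gr0I)
      have b0: "b > 0" using b n0 Q_pos unfolding S0_def F_def P_def Q_def
        by (auto intro: Nat.gr0I)
      have "\<forall>r. prime r \<longrightarrow> \<not> (Q r dvd a \<and> Q r dvd b)"
      proof (intro allI impI notI)
        fix r :: nat assume r: "prime r" and d: "Q r dvd a \<and> Q r dvd b"
        have "a \<notin> F" using d L1[OF n0 a0] r unfolding F_def Q_def by auto
        moreover have "b \<notin> F" using d L1[OF n0 b0] r unfolding F_def Q_def by auto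
        ultimately obtain p q where p: "p \<in> P" "a = Q p" and q: "q \<in> P" "b = Q q"
          using a b unfolding S0_def by auto
        have "r = p" using Q_inj'[of r p n] r p d unfolding P_def Q_def by auto
        moreover have "r = q" using Q_inj'[of r q n] r q d unfolding P_def Q_def by auto
        ultimately show False using ab p q by simp
      qed
      then show "D_adj n a b" unfolding D_adj_def using ab L2[OF n0 a0, of b]
        unfolding Q_def by auto
    qed
  qed
  have cardS0: "card S0 = card F + card P"
  proof -
    have "F \<inter> Q ` P = {}" using QnotF unfolding P_def by auto
    then have "card S0 = card F + card (Q ` P)"
      unfolding S0_def using finF finP by (simp add: card_Un_disjoint)
    also have "card (Q ` P) = card P" using QinjP by (rule card_image)
    finally show ?thesis .
  qed
  have ub: "card S \<le> card F + card P" if cl: "is_clique (D_vertices n) (D_adj n) S" for S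
  proof -
    have Ssub: "S \<subseteq> {1..n}" using cl unfolding is_clique_def D_vertices_def by auto
    have finS: "finite S" using Ssub finite_subset by blast
    have ex: "\<exists>p. prime p \<and> Q p dvd x" if "x \<in> S - F" for x
    proof -
      have "x > 0" using that Ssub by auto
      then show ?thesis using L1[OF n0, of x] that unfolding F_def Q_def by auto
    qed
    define f where "f x = (SOME p. prime p \<and> Q p dvd x)" for x
    have f: "prime (f x) \<and> Q (f x) dvd x" if "x \<in> S - F" for x
      unfolding f_def using someI_ex[OF ex[OF that]] .
    have finj: "inj_on f (S - F)"
    proof (rule inj_onI, rule ccontr)
      fix x y assume x: "x \<in> S - F" and y: "y \<in> S - F" and e: "f x = f y" and xy: "x \<noteq> y"
      have "D_adj n x y" using cl x y xy unfolding is_clique_def by auto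
      then have "gcd x y dvd n" unfolding D_adj_def by simp
      moreover have "x > 0" using x Ssub by auto
      ultimately show False using L2[OF n0, of x y] f[OF x] f[OF y] e unfolding Q_def by metis
    qed
    have fP: "f ` (S - F) \<subseteq> P"
    proof
      fix p assume "p \<in> f ` (S - F)"
      then obtain x where x: "x \<in> S - F" "p = f x" by auto
      have "x \<le> n" "x > 0" using x Ssub by auto
      have "Q p dvd x" using f[OF x(1)] x(2) by simp
      then have "Q p \<le> x" using \<open>x > 0\<close> by (rule dvd_imp_le)
      then have "Q p \<le> n" using \<open>x \<le> n\<close> by simp
      then show "p \<in> P" using f[OF x(1)] x(2) unfolding P_def by auto
    qed
    have "card (S - F) = card (f ` (S - F))" using finj by (simp add: card_image)
    also have "\<dots> \<le> card P" using fP finP by (rule card_mono[rotated])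
    finally have 1: "card (S - F) \<le> card P" .
    have 2: "card (S \<inter> F) \<le> card F" using finF by (simp add: card_mono)
    have "card S = card (S \<inter> F) + card (S - F)"
      using finS by (metis card_Int_Diff)
    then show ?thesis using 1 2 by simp
  qed
  have finC: "finite (card ` {S. is_clique (D_vertices n) (D_adj n) S})"
  proof -
    have "{S. is_clique (D_vertices n) (D_adj n) S} \<subseteq> Pow {1..n}"
      unfolding is_clique_def D_vertices_def by auto
    then show ?thesis using finite_subset by blast
  qed
  show ?thesis unfolding Cl_D_def clique_number_def
  proof (rule Max_eqI[OF finC])
    show "card F + card P \<in> card ` {S. is_clique (D_vertices n) (D_adj n) S}"
      using cl0 cardS0 by (metis (mono_tags) image_eqI mem_Collect_eq)
  qed (use ub in auto)
qed

lemma Q_not_n: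
  fixes n p :: nat
  assumes "n > 0" "prime p"
  shows "\<not> p ^ vacute p n dvd n"
  using Q_dvd_iff[OF assms(2) assms(1), of n] by simp

theorem mainTheorem8:
  fixes n :: nat
  assumes "n \<ge> 2"
  shows "int (Cl_D n) = int (tau n) + int (prime_pi n) - int (omega n) + int (gamma 1 n)
         \<and> (prime n \<longrightarrow> Cl_D n = prime_pi n + 1)"
proof -
  have n0: "n > 0" using assms by simp
  define Q where "Q \<equiv> \<lambda>p::nat. p ^ vacute p n"
  define P where "P = {p. prime p \<and> Q p \<le> n}"
  have cl: "Cl_D n = tau n + card P" using Cl_formula[OF assms] unfolding tau_def P_def Q_def by simp
  define A where "A = {p::nat. prime p \<and> p \<le> n}"
  define B where "B = {p. prime p \<and> p dvd n \<and> Q p \<le> n}"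
  have pf: "prime_factors n = {p. prime p \<and> p dvd n}" using n0 by (simp add: prime_factors_dvd)
  have Qnd: "Q p = p" if "prime p" "\<not> p dvd n" for p
    using not_dvd_imp_multiplicity_0[OF that(2)] unfolding Q_def vacute_def by simp
  have Qge: "p \<le> Q p" if "prime p" for p using Q_ge[OF that] unfolding Q_def by simp
  have P_eq: "P = (A - prime_factors n) \<union> B"
  proof (rule set_eqI)
    fix p
    show "p \<in> P \<longleftrightarrow> p \<in> (A - prime_factors n) \<union> B"
    proof (cases "prime p")
      case False then show ?thesis unfolding P_def A_def B_def pf by simp
    next
      case pr: True
      show ?thesis
      proof (cases "p dvd n")
        case True then show ?thesis using pr unfolding P_def A_def B_def pf by simp
      next
        case False
        have "Q p = p" using Qnd[OF pr False] .
        then show ?thesis using pr False unfolding P_def A_def B_def pf by simp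
      qed
    qed
  qed
  have finA: "finite A" unfolding A_def by auto
  have BA: "B \<subseteq> A"
  proof
    fix p assume "p \<in> B"
    then have p: "prime p" "Q p \<le> n" unfolding B_def by auto
    then have "p \<le> n" using Qge[OF p(1)] by linarith
    then show "p \<in> A" using p unfolding A_def by simp
  qed
  have finB: "finite B" using BA finA finite_subset by blast
  have pfA: "prime_factors n \<subseteq> A" unfolding A_def pf using n0 by (auto intro: dvd_imp_le)
  have disj: "(A - prime_factors n) \<inter> B = {}" unfolding B_def pf by auto
  have cardP: "card P = (card A - card (prime_factors n)) + card B"
    unfolding P_eq using finA finB disj pfA
    by (simp add: card_Un_disjoint card_Diff_subset finite_subset)
  have le: "card (prime_factors n) \<le> card A" using pfA finA by (rule card_mono[rotated])
  have injB: "inj_on Q B" unfolding inj_on_def B_def Q_def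
    by (metis (mono_tags, lifting) Q_inj' dvd_refl mem_Collect_eq)
  have gset: "{p ^ vacute p n | p. prime p \<and> p dvd n \<and> 1 < real (p ^ vacute p n) \<and> p ^ vacute p n < n}
      = Q ` B"
  proof (rule set_eqI)
    fix x
    have aux: "prime p \<Longrightarrow> 1 < Q p" for p using Qge[of p] prime_gt_1_nat[of p] by simp
    have aux2: "prime p \<Longrightarrow> Q p \<noteq> n" for p using Q_not_n[OF n0, of p] unfolding Q_def by auto
    show "x \<in> {p ^ vacute p n | p. prime p \<and> p dvd n \<and> 1 < real (p ^ vacute p n) \<and> p ^ vacute p n < n}
      \<longleftrightarrow> x \<in> Q ` B"
    proof
      assume "x \<in> {p ^ vacute p n | p. prime p \<and> p dvd n \<and> 1 < real (p ^ vacute p n) \<and> p ^ vacute p n < n}"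
      then obtain p where "x = Q p" "prime p" "p dvd n" "Q p < n" unfolding Q_def by auto
      then show "x \<in> Q ` B" unfolding B_def by auto
    next
      assume "x \<in> Q ` B"
      then obtain p where p: "x = Q p" "prime p" "p dvd n" "Q p \<le> n" unfolding B_def by auto
      then have "Q p < n" using aux2[of p] by simp
      moreover have "1 < real (Q p)" using aux[OF p(2)] by simp
      ultimately show "x \<in> {p ^ vacute p n | p. prime p \<and> p dvd n \<and> 1 < real (p ^ vacute p n) \<and> p ^ vacute p n < n}"
        using p unfolding Q_def by auto
    qed
  qed
  have gam: "gamma 1 n = card B" unfolding gamma_def gset using injB by (simp add: card_image)
  have part1: "int (Cl_D n) = int (tau n) + int (prime_pi n) - int (omega n) + int (gamma 1 n)"
    using cl cardP le gam unfolding prime_pi_def omega_def A_def by simp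
  moreover have "Cl_D n = prime_pi n + 1" if pn: "prime n"
  proof -
    have "{d. d dvd n} = {1, n}" using pn by (auto simp: prime_nat_iff)
    then have t: "tau n = 2" unfolding tau_def using assms by simp
    have "prime_factors n = {n}" unfolding pf using pn primes_dvd_imp_eq by auto
    then have o: "omega n = 1" unfolding omega_def by simp
    have "B = {}"
    proof (rule ccontr)
      assume "B \<noteq> {}"
      then obtain p where p: "prime p" "p dvd n" "Q p \<le> n" unfolding B_def by auto
      then have "p = n" using pn primes_dvd_imp_eq by blast
      then have "Q p = n" using Qge[OF p(1)] p(3) by simp
      then show False using Q_not_n[OF n0 p(1)] unfolding Q_def by simp
    qed
    then have "gamma 1 n = 0" using gam by simp
    then show ?thesis using part1 t o by simp
  qed
  ultimately show ?thesis by blast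
qed

end
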